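(* Let $X$ be a discretely geodesic metric space with $\beta$-stable intervals, and let $x,x',v\in X$. Define $F_{xv}\colon B(v,\beta)\to\mathbb Z$ by $F_{xv}(u)=d(x,u)-d(x,v)$, and similarly $F_{x'v}$. If $F_{xv}\le F_{x'v}$ on $B(v,\beta)$, then $C(x,v)\subset C(x',v)$. Hence $F_{xv}=F_{x'v}$ implies $C(x,v)=C(x',v)$.
   Context: $B(v,\beta)$ is the closed ball. $X$ is discretely geodesic if $d$ is integer valued and any $x,y$ are joined by an isometric embedding $\gamma\colon\{0,\dots,d(x,y)\}\to X$ with $\gamma(0)=x,\gamma(d(x,y))=y$. $I(x,y)=\{u: d(x,u)+d(u,y)=d(x,y)\}$; $C(x,v)=\{y: v\in I(x,y)\}$. $\beta$-stable intervals: for all $x,y,y'$ with $d(y,y')=1$, the Hausdorff distance between $I(x,y)$ and $I(x,y')$ is at most $\beta$. *)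

theory Defs
  imports Complex_Main
begin

definition int_metric :: "'a set \<Rightarrow> ('a \<Rightarrow> 'a \<Rightarrow> int) \<Rightarrow> bool" where
  "int_metric X d \<longleftrightarrow>
     (\<forall>x\<in>X. \<forall>y\<in>X. d x y \<ge> 0 \<and> (d x y = 0 \<longleftrightarrow> x = y) \<and> d x y = d y x) \<and>
     (\<forall>x\<in>X. \<forall>y\<in>X. \<forall>z\<in>X. d x z \<le> d x y + d y z)"

definition discretely_geodesic :: "'a set \<Rightarrow> ('a \<Rightarrow> 'a \<Rightarrow> int) \<Rightarrow> bool" where
  "discretely_geodesic X d \<longleftrightarrow> int_metric X d \<and>
     (\<forall>x\<in>X. \<forall>y\<in>X. \<exists>\<gamma> :: nat \<Rightarrow> 'a.
        \<gamma> 0 = x \<and> \<gamma> (nat (d x y)) = y \<and>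
        (\<forall>i\<le>nat (d x y). \<gamma> i \<in> X) \<and>
        (\<forall>i\<le>nat (d x y). \<forall>j\<le>nat (d x y). d (\<gamma> i) (\<gamma> j) = \<bar>int i - int j\<bar>))"

definition cball_X :: "'a set \<Rightarrow> ('a \<Rightarrow> 'a \<Rightarrow> int) \<Rightarrow> 'a \<Rightarrow> real \<Rightarrow> 'a set" where
  "cball_X X d v r = {u\<in>X. real_of_int (d v u) \<le> r}"

definition interval :: "'a set \<Rightarrow> ('a \<Rightarrow> 'a \<Rightarrow> int) \<Rightarrow> 'a \<Rightarrow> 'a \<Rightarrow> 'a set" where
  "interval X d x y = {u\<in>X. d x u + d u y = d x y}"

definition cone :: "'a set \<Rightarrow> ('a \<Rightarrow> 'a \<Rightarrow> int) \<Rightarrow> 'a \<Rightarrow> 'a \<Rightarrow> 'a set" where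
  "cone X d x v = {y\<in>X. v \<in> interval X d x y}"

text \<open>Since the metric is
  integer valued, the infimum of distances from a point to a nonempty set is attained,
  so this is the literal unfolding of "sup_a inf_b d(a,b) <= r and symmetrically".\<close>
definition hausdorff_le :: "('a \<Rightarrow> 'a \<Rightarrow> int) \<Rightarrow> 'a set \<Rightarrow> 'a set \<Rightarrow> real \<Rightarrow> bool" where
  "hausdorff_le d A B r \<longleftrightarrow>
     (\<forall>a\<in>A. \<exists>b\<in>B. real_of_int (d a b) \<le> r) \<and> (\<forall>b\<in>B. \<exists>a\<in>A. real_of_int (d a b) \<le> r)"

definition stable_intervals :: "'a set \<Rightarrow> ('a \<Rightarrow> 'a \<Rightarrow> int) \<Rightarrow> real \<Rightarrow> bool" where
  "stable_intervals X d \<beta> \<longleftrightarrow>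
     (\<forall>x\<in>X. \<forall>y\<in>X. \<forall>y'\<in>X. d y y' = 1 \<longrightarrow>
        hausdorff_le d (interval X d x y) (interval X d x y') \<beta>)"

end

theory Submission
  imports Defs
begin

lemma geo:
  assumes "discretely_geodesic X d" "x \<in> X" "y \<in> X"
  shows "\<exists>\<gamma> :: nat \<Rightarrow> 'a.
        \<gamma> 0 = x \<and> \<gamma> (nat (d x y)) = y \<and>
        (\<forall>i\<le>nat (d x y). \<gamma> i \<in> X) \<and>
        (\<forall>i\<le>nat (d x y). \<forall>j\<le>nat (d x y). d (\<gamma> i) (\<gamma> j) = \<bar>int i - int j\<bar>)"
proof -
  have "\<forall>x\<in>X. \<forall>y\<in>X. \<exists>\<gamma> :: nat \<Rightarrow> 'a.
        \<gamma> 0 = x \<and> \<gamma> (nat (d x y)) = y \<and>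
        (\<forall>i\<le>nat (d x y). \<gamma> i \<in> X) \<and>
        (\<forall>i\<le>nat (d x y). \<forall>j\<le>nat (d x y). d (\<gamma> i) (\<gamma> j) = \<bar>int i - int j\<bar>)"
    using assms(1) unfolding discretely_geodesic_def by (rule conjunct2)
  then show ?thesis using assms(2,3) by blast
qed

lemma main_ind:
  fixes X :: "'a set" and d :: "'a \<Rightarrow> 'a \<Rightarrow> int" and \<beta> :: real and x x' v :: 'a
  assumes dg: "discretely_geodesic X d"
    and st: "stable_intervals X d \<beta>"
    and xX: "x \<in> X" and x'X: "x' \<in> X" and vX: "v \<in> X"
    and H: "\<forall>u\<in>cball_X X d v \<beta>. d x u - d x v \<le> d x' u - d x' v"
  shows "\<forall>y\<in>X. d v y = int n \<longrightarrow> d x v + d v y = d x y \<longrightarrow> d x' v + d v y = d x' y"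
proof (induction n)
  have m: "int_metric X d" using dg unfolding discretely_geodesic_def by blast
  have z: "\<And>a b. a \<in> X \<Longrightarrow> b \<in> X \<Longrightarrow> (d a b = 0 \<longleftrightarrow> a = b)" using m unfolding int_metric_def by blast
  case 0
  show ?case
  proof (intro ballI impI)
    fix y assume "y \<in> X" "d v y = int 0"
    then have "v = y" using z[OF vX] by simp
    then show "d x' v + d v y = d x' y" using z[OF vX vX] by simp
  qed
next
  have m: "int_metric X d" using dg unfolding discretely_geodesic_def by blast
  have nn: "\<And>a b. a \<in> X \<Longrightarrow> b \<in> X \<Longrightarrow> d a b \<ge> 0" using m unfolding int_metric_def by blast
  have sy: "\<And>a b. a \<in> X \<Longrightarrow> b \<in> X \<Longrightarrow> d a b = d b a" using m unfolding int_metric_def by blast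
  have tr: "\<And>a b c. a \<in> X \<Longrightarrow> b \<in> X \<Longrightarrow> c \<in> X \<Longrightarrow> d a c \<le> d a b + d b c"
    using m unfolding int_metric_def by blast
  case (Suc n)
  show ?case
  proof (intro ballI impI)
    fix y assume yX: "y \<in> X" and dy: "d v y = int (Suc n)" and vi: "d x v + d v y = d x y"
    obtain \<gamma> where g0: "\<gamma> 0 = v" and g1: "\<gamma> (nat (d v y)) = y"
      and gX: "\<forall>i\<le>nat (d v y). \<gamma> i \<in> X"
      and gd: "\<forall>i\<le>nat (d v y). \<forall>j\<le>nat (d v y). d (\<gamma> i) (\<gamma> j) = \<bar>int i - int j\<bar>"
      using geo[OF dg vX yX] by blast
    have nd: "nat (d v y) = Suc n" using dy by simp
    define y' where "y' = \<gamma> n"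
    have y'X: "y' \<in> X" using gX nd y'_def by auto
    have "d (\<gamma> 0) (\<gamma> n) = \<bar>int 0 - int n\<bar>" using gd nd by simp
    then have dvy': "d v y' = int n" using g0 y'_def by simp
    have "d (\<gamma> n) (\<gamma> (Suc n)) = \<bar>int n - int (Suc n)\<bar>" using gd nd by simp
    then have dy'y: "d y' y = 1" using g1 nd y'_def by simp
    have "d x y' \<le> d x v + d v y'" using tr[OF xX vX y'X] .
    moreover have "d x y \<le> d x y' + d y' y" using tr[OF xX y'X yX] .
    ultimately have vi': "d x v + d v y' = d x y'" using vi dy dvy' dy'y by simp
    have ih: "d x' v + d v y' = d x' y'" using Suc.IH y'X dvy' vi' by (simp add: Ball_def)
    have "v \<in> interval X d x' y'" using ih vX unfolding interval_def by simp
    moreover have "hausdorff_le d (interval X d x' y') (interval X d x' y) \<beta>"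
      using st x'X y'X yX dy'y unfolding stable_intervals_def by (simp add: Ball_def)
    ultimately obtain w where wI: "w \<in> interval X d x' y" and dvw: "real_of_int (d v w) \<le> \<beta>"
      unfolding hausdorff_le_def by (meson)
    have wX: "w \<in> X" and ww: "d x' w + d w y = d x' y" using wI unfolding interval_def by auto
    have "w \<in> cball_X X d v \<beta>" using wX dvw unfolding cball_X_def by simp
    then have hw: "d x w - d x v \<le> d x' w - d x' v" using H by (simp add: Ball_def)
    have "d x y \<le> d x w + d w y" using tr[OF xX wX yX] .
    moreover have "d x' y \<le> d x' v + d v y" using tr[OF x'X vX yX] .
    ultimately show "d x' v + d v y = d x' y" using hw ww vi by linarith
  qed
qed

lemma incl:
  fixes X :: "'a set" and d :: "'a \<Rightarrow> 'a \<Rightarrow> int" and \<beta> :: real and x x' v :: 'a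
  assumes dg: "discretely_geodesic X d"
    and st: "stable_intervals X d \<beta>"
    and xX: "x \<in> X" and x'X: "x' \<in> X" and vX: "v \<in> X"
    and H: "\<forall>u\<in>cball_X X d v \<beta>. d x u - d x v \<le> d x' u - d x' v"
  shows "cone X d x v \<subseteq> cone X d x' v"
proof
  fix y assume "y \<in> cone X d x v"
  then have yX: "y \<in> X" and vi: "d x v + d v y = d x y"
    unfolding cone_def interval_def by auto
  have m: "int_metric X d" using dg unfolding discretely_geodesic_def by blast
  have "d v y \<ge> 0" using m vX yX unfolding int_metric_def by blast
  then have "d v y = int (nat (d v y))" by simp
  then have "d x' v + d v y = d x' y" using main_ind[OF dg st xX x'X vX H, of "nat (d v y)"] yX vi by blast
  then show "y \<in> cone X d x' v" using yX vX unfolding cone_def interval_def by simp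
qed

theorem lemma5p8:
  fixes X :: "'a set" and d :: "'a \<Rightarrow> 'a \<Rightarrow> int" and \<beta> :: real and x x' v :: 'a
  assumes "discretely_geodesic X d"
    and "stable_intervals X d \<beta>"
    and "x \<in> X" and "x' \<in> X" and "v \<in> X"
  shows "((\<forall>u\<in>cball_X X d v \<beta>. d x u - d x v \<le> d x' u - d x' v)
           \<longrightarrow> cone X d x v \<subseteq> cone X d x' v) \<and>
         ((\<forall>u\<in>cball_X X d v \<beta>. d x u - d x v = d x' u - d x' v)
           \<longrightarrow> cone X d x v = cone X d x' v)"
proof (intro conjI impI)
  assume "\<forall>u\<in>cball_X X d v \<beta>. d x u - d x v \<le> d x' u - d x' v"
  then show "cone X d x v \<subseteq> cone X d x' v" using incl[OF assms] by blast
next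
  assume h: "\<forall>u\<in>cball_X X d v \<beta>. d x u - d x v = d x' u - d x' v"
  then have "\<forall>u\<in>cball_X X d v \<beta>. d x u - d x v \<le> d x' u - d x' v" by simp
  moreover have "\<forall>u\<in>cball_X X d v \<beta>. d x' u - d x' v \<le> d x u - d x v" using h by simp
  ultimately show "cone X d x v = cone X d x' v" using incl[OF assms(1,2)] assms(3-5) by blast
qed

end
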